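(* Let $\mathcal{L}$ be the collection of lower subsets of $\Omega$ and $\mathcal{B}_{\mathcal{L}}=\mathcal{B}\cap\mathcal{L}$ the collection of beneficial lower subsets of $\Omega$ (definitions below). Then $\mathcal{L}$ and $\mathcal{B}_{\mathcal{L}}$ are quadratic algebras of subsets of $\Omega$, and $\widehat{\mu}$ is a $q$-measure on $\mathcal{B}_{\mathcal{L}}$ that extends $\mu$; that is, $\mathcal{C}\subseteq\mathcal{B}_{\mathcal{L}}$ and $\widehat{\mu}(A)=\mu(A)$ for all $A\in\mathcal{C}$.
   Context: For $n\ge 1$, an $n$-path is a string $\omega=\alpha_0\alpha_1\cdots\alpha_n$ with $\alpha_k\in\{0,1\}$ and $\alpha_0=0$; $\Omega_n$ is the set of $n$-paths. For $n$-paths $\omega=\alpha_0\cdots\alpha_n$, $\omega'=\alpha'_0\cdots\alpha'_n$ put $D^n(\omega,\omega')=2^{-n}\prod_{k=1}^n i^{|\alpha_k-\alpha_{k-1}|}\prod_{k=1}^n i^{-|\alpha'_k-\alpha'_{k-1}|}\,\delta_{\alpha_n\alpha'_n}$ ($i=\sqrt{-1}$), and for $A\subseteq\Omega_n$ let $\mu_n(A)=\sum_{\omega,\omega'\in A}D^n(\omega,\omega')$ (a nonnegative real). $\Omega$ is the set of infinite sequences $\alpha_0\alpha_1\alpha_2\cdots$ with $\alpha_k\in\{0,1\}$, $\alpha_0=0$. A cylinder set is a set of the form $\{\alpha_0\alpha_1\cdots\in\Omega:\alpha_0\cdots\alpha_n\in B\}$ for some $n$ and some $B\subseteq\Omega_n$;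 $\mathcal{C}$ denotes the algebra of cylinder sets, and $\mu$ on $\mathcal{C}$ is defined by $\mu(\{\alpha_0\alpha_1\cdots:\alpha_0\cdots\alpha_n\in B\})=\mu_n(B)$ (this is well defined). For $A\subseteq\Omega$ and $n\ge 0$, $A^{(n)}=\{\omega\in\Omega:\text{there is }\omega'\in A\text{ whose first } n+1 \text{ entries agree with those of }\omega\}$; this is a cylinder set. $A$ is a lower set if $A=\bigcap_n A^{(n)}$; $A$ is beneficial if $\lim_{n\to\infty}\mu(A^{(n)})$ exists and is finite, and then $\widehat{\mu}(A)=\lim_{n\to\infty}\mu(A^{(n)})$. $\mathcal{B}$ is the set of beneficial sets. A collection $Q$ of subsets of a set $S$ is a quadratic algebra if $\emptyset,S\in Q$ and whenever $A,B,C\in Q$ are mutually disjoint with $A\cup B,A\cup C,B\cup C\in Q$, then $A\cup B\cup C\in Q$. A $q$-measure on a quadratic algebra $Q$ is a map $\nu:Q\to[0,\infty)$ such that for all mutually disjoint $A,B,C\in Q$ with $A\cup B,A\cup C,B\cup C\in Q$: $\nu(A\cup B\cup C)=\nu(A\cup B)+\nu(A\cup C)+\nu(B\cup C)-\nu(A)-\nu(B)-\nu(C)$. *)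

theory Defs
  imports Complex_Main
begin

definition Omega_n :: "nat \<Rightarrow> nat list set" where
  "Omega_n n = {xs. length xs = Suc n \<and> set xs \<subseteq> {0,1} \<and> xs ! 0 = 0}"

definition jump :: "nat list \<Rightarrow> nat \<Rightarrow> nat" where
  "jump xs k = nat \<bar>int (xs ! k) - int (xs ! (k - 1))\<bar>"

definition D :: "nat \<Rightarrow> nat list \<Rightarrow> nat list \<Rightarrow> complex" where
  "D n w w' = (1 / 2 ^ n) * (\<Prod>k\<in>{1..n}. \<i> ^ jump w k)
      * (\<Prod>k\<in>{1..n}. inverse (\<i> ^ jump w' k))
      * (if w ! n = w' ! n then 1 else 0)"

definition mu_n :: "nat \<Rightarrow> nat list set \<Rightarrow> real" where
  "mu_n n B = Re (\<Sum>w\<in>B. \<Sum>w'\<in>B. D n w w')"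

definition Omega :: "(nat \<Rightarrow> nat) set" where
  "Omega = {w. w 0 = 0 \<and> (\<forall>k. w k \<in> {0,1})}"

definition prefix_of :: "nat \<Rightarrow> (nat \<Rightarrow> nat) \<Rightarrow> nat list" where
  "prefix_of n w = map w [0..<Suc n]"

definition cyl :: "nat \<Rightarrow> nat list set \<Rightarrow> (nat \<Rightarrow> nat) set" where
  "cyl n B = {w \<in> Omega. prefix_of n w \<in> B}"

definition Cyl :: "(nat \<Rightarrow> nat) set set" where
  "Cyl = {A. \<exists>n B. B \<subseteq> Omega_n n \<and> A = cyl n B}"

definition mu :: "(nat \<Rightarrow> nat) set \<Rightarrow> real" where
  "mu A = (THE x. \<exists>n B. B \<subseteq> Omega_n n \<and> A = cyl n B \<and> x = mu_n n B)"

definition up :: "nat \<Rightarrow> (nat \<Rightarrow> nat) set \<Rightarrow> (nat \<Rightarrow> nat) set" where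
  "up n A = {w \<in> Omega. \<exists>w'\<in>A. \<forall>k\<le>n. w k = w' k}"

definition Lower :: "(nat \<Rightarrow> nat) set set" where
  "Lower = {A. A \<subseteq> Omega \<and> A = (\<Inter>n. up n A)}"

definition Beneficial :: "(nat \<Rightarrow> nat) set set" where
  "Beneficial = {A. A \<subseteq> Omega \<and> convergent (\<lambda>n. mu (up n A))}"

definition mu_hat :: "(nat \<Rightarrow> nat) set \<Rightarrow> real" where
  "mu_hat A = lim (\<lambda>n. mu (up n A))"

definition quad_alg :: "'a set \<Rightarrow> 'a set set \<Rightarrow> bool" where
  "quad_alg S Q \<longleftrightarrow> Q \<subseteq> Pow S \<and> {} \<in> Q \<and> S \<in> Q \<and>
     (\<forall>A\<in>Q. \<forall>B\<in>Q. \<forall>C\<in>Q. A \<inter> B = {} \<and> A \<inter> C = {} \<and> B \<inter> C = {} \<and>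
        A \<union> B \<in> Q \<and> A \<union> C \<in> Q \<and> B \<union> C \<in> Q \<longrightarrow> A \<union> B \<union> C \<in> Q)"

definition q_measure :: "'a set set \<Rightarrow> ('a set \<Rightarrow> real) \<Rightarrow> bool" where
  "q_measure Q \<nu> \<longleftrightarrow> (\<forall>A\<in>Q. \<nu> A \<ge> 0) \<and>
     (\<forall>A\<in>Q. \<forall>B\<in>Q. \<forall>C\<in>Q. A \<inter> B = {} \<and> A \<inter> C = {} \<and> B \<inter> C = {} \<and>
        A \<union> B \<in> Q \<and> A \<union> C \<in> Q \<and> B \<union> C \<in> Q \<longrightarrow>
        \<nu> (A \<union> B \<union> C) = \<nu> (A \<union> B) + \<nu> (A \<union> C) + \<nu> (B \<union> C) - \<nu> A - \<nu> B - \<nu> C)"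

end

theory Submission
  imports Defs
begin

lemma prefix_len[simp]: "length (prefix_of n w) = Suc n"
  by (simp add: prefix_of_def)

lemma prefix_nth: "k \<le> n \<Longrightarrow> prefix_of n w ! k = w k"
  by (simp add: prefix_of_def nth_map_upt del: upt_Suc)

lemma prefix_eq_iff: "prefix_of n v = prefix_of n w \<longleftrightarrow> (\<forall>k\<le>n. v k = w k)"
  by (auto simp add: prefix_of_def simp del: upt_Suc)

lemma prefix_in_Omega_n: "w \<in> Omega \<Longrightarrow> prefix_of n w \<in> Omega_n n"
proof -
  assume w: "w \<in> Omega"
  hence a: "\<forall>k. w k \<in> {0,1}" and b: "w 0 = 0" by (auto simp: Omega_def)
  have "set (prefix_of n w) \<subseteq> {0,1}" unfolding prefix_of_def set_map by (metis a image_subset_iff)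
  thus ?thesis unfolding Omega_n_def using prefix_nth[of 0 n w] b by simp
qed

lemma Omega_n_realize: assumes "xs \<in> Omega_n n" shows "\<exists>w\<in>Omega. prefix_of n w = xs"
proof -
  define w where "w = (\<lambda>k. if k < length xs then xs!k else 0)"
  have l: "length xs = Suc n" and s: "set xs \<subseteq> {0,1}" and z: "xs!0 = 0"
    using assms by (auto simp: Omega_n_def)
  have "\<And>k. w k \<in> {0,1}"
  proof -
    fix k show "w k \<in> {0,1}"
    proof (cases "k < length xs")
      case True
      have "xs!k \<in> {0,1}" using s nth_mem[OF True] by blast
      thus ?thesis using True by (simp add: w_def)
    qed (simp add: w_def)
  qed
  moreover have "w 0 = 0" using z l by (simp add: w_def)
  ultimately have "w \<in> Omega" unfolding Omega_def by blast
  moreover have "prefix_of n w = xs"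
  proof (rule nth_equalityI)
    show "length (prefix_of n w) = length xs" using l by simp
    fix i assume "i < length (prefix_of n w)"
    hence "i \<le> n" by simp
    thus "prefix_of n w ! i = xs ! i" using l by (simp add: prefix_nth w_def)
  qed
  ultimately show ?thesis by blast
qed

lemma finite_Omega_n: "finite (Omega_n n)"
proof -
  have "Omega_n n \<subseteq> {xs. set xs \<subseteq> {0,1} \<and> length xs = Suc n}"
    by (auto simp: Omega_n_def)
  moreover have "finite {xs. set xs \<subseteq> {0::nat,1} \<and> length xs = Suc n}"
    by (rule finite_lists_length_eq) simp
  ultimately show ?thesis by (rule finite_subset)
qed

lemma up_cyl: "up n A = cyl n (prefix_of n ` A)"
  unfolding up_def cyl_def by (auto simp: prefix_eq_iff[symmetric])

lemma prefix_image_sub: "A \<subseteq> Omega \<Longrightarrow> prefix_of n ` A \<subseteq> Omega_n n"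
  using prefix_in_Omega_n by blast

lemma prefix_cyl: "B \<subseteq> Omega_n n \<Longrightarrow> prefix_of n ` cyl n B = B"
  unfolding cyl_def using Omega_n_realize by fastforce

definition extn :: "nat \<Rightarrow> nat \<Rightarrow> nat list set \<Rightarrow> nat list set" where
  "extn m n B = {xs \<in> Omega_n m. take (Suc n) xs \<in> B}"

lemma take_prefix: "n \<le> m \<Longrightarrow> take (Suc n) (prefix_of m w) = prefix_of n w"
  by (simp add: prefix_of_def take_map min_def del: upt_Suc)

lemma cyl_extn: "n \<le> m \<Longrightarrow> cyl m (extn m n B) = cyl n B"
  unfolding cyl_def extn_def using prefix_in_Omega_n take_prefix by auto

lemma extn_refl: "B \<subseteq> Omega_n n \<Longrightarrow> extn n n B = B"
  unfolding extn_def by (auto simp: Omega_n_def)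

lemma extn_Suc: assumes "n \<le> m"
  shows "extn (Suc m) n B = (\<lambda>(xs,a). xs @ [a]) ` (extn m n B \<times> {0,1})"
proof
  show "extn (Suc m) n B \<subseteq> (\<lambda>(xs,a). xs @ [a]) ` (extn m n B \<times> {0,1})"
  proof
    fix xs assume "xs \<in> extn (Suc m) n B"
    hence l: "length xs = Suc (Suc m)" and s: "set xs \<subseteq> {0,1}" and z: "xs!0 = 0"
      and t: "take (Suc n) xs \<in> B" by (auto simp: extn_def Omega_n_def)
    have ne: "xs \<noteq> []" using l by auto
    have e: "xs = butlast xs @ [last xs]" using ne by simp
    have "butlast xs \<in> extn m n B"
      unfolding extn_def Omega_n_def
      using l s z t assms in_set_butlastD[of _ xs] nth_butlast[of 0 xs]
      by (auto simp: butlast_conv_take min_def)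
    moreover have "last xs \<in> {0,1}" using s last_in_set[OF ne] by blast
    ultimately show "xs \<in> (\<lambda>(xs,a). xs @ [a]) ` (extn m n B \<times> {0,1})"
      using e by (metis (no_types, lifting) SigmaI case_prod_conv image_eqI)
  qed
next
  show "(\<lambda>(xs,a). xs @ [a]) ` (extn m n B \<times> {0,1}) \<subseteq> extn (Suc m) n B"
    using assms by (auto simp: extn_def Omega_n_def nth_append)
qed


lemma jump_app: "1 \<le> k \<Longrightarrow> k < length xs \<Longrightarrow> jump (xs@[a]) k = jump xs k"
  by (simp add: jump_def nth_append)

lemma jump_app_last: "length xs = Suc m \<Longrightarrow> jump (xs@[a]) (Suc m) = nat \<bar>int a - int (xs!m)\<bar>"
  by (simp add: jump_def nth_append)

lemma prod_app:
  assumes "length u = Suc m"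
  shows "(\<Prod>k\<in>{1..Suc m}. f (jump (u@[a]) k)) = (\<Prod>k\<in>{1..m}. f (jump u k)) * f (nat \<bar>int a - int (u!m)\<bar>)"
proof -
  have "(\<Prod>k\<in>{1..Suc m}. f (jump (u@[a]) k)) = (\<Prod>k\<in>{1..m}. f (jump (u@[a]) k)) * f (jump (u@[a]) (Suc m))"
    by (simp add: prod.cl_ivl_Suc)
  also have "(\<Prod>k\<in>{1..m}. f (jump (u@[a]) k)) = (\<Prod>k\<in>{1..m}. f (jump u k))"
    by (rule prod.cong) (use assms in \<open>auto simp: jump_app\<close>)
  finally show ?thesis using assms by (simp add: jump_app_last)
qed

lemma Omega_n_nth: assumes "xs \<in> Omega_n m" "k \<le> m" shows "xs!k \<in> {0,1}"
proof -
  have "k < length xs" "set xs \<subseteq> {0,1}" using assms by (auto simp: Omega_n_def)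
  thus ?thesis using nth_mem[of k xs] by blast
qed

lemma KD:
  assumes u: "u \<in> Omega_n m" and v: "v \<in> Omega_n m"
  shows "(\<Sum>a\<in>{0,1::nat}. \<Sum>b\<in>{0,1::nat}. D (Suc m) (u@[a]) (v@[b])) = D m u v"
proof -
  have lu: "length u = Suc m" and lv: "length v = Suc m" using u v by (auto simp: Omega_n_def)
  have um: "u!m \<in> {0,1}" using Omega_n_nth[OF u] by simp
  have vm: "v!m \<in> {0,1}" using Omega_n_nth[OF v] by simp
  define p where "p = (\<Prod>k\<in>{1..m}. \<i> ^ jump u k)"
  define q where "q = (\<Prod>k\<in>{1..m}. inverse (\<i> ^ jump v k))"
  have e: "\<And>a b. D (Suc m) (u@[a]) (v@[b]) = (1 / 2 ^ Suc m) * (p * \<i> ^ nat \<bar>int a - int (u!m)\<bar>)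
      * (q * inverse (\<i> ^ nat \<bar>int b - int (v!m)\<bar>)) * (if a = b then 1 else 0)"
    unfolding D_def p_def q_def
    using prod_app[OF lu, of "\<lambda>j. \<i> ^ j"] prod_app[OF lv, of "\<lambda>j. inverse (\<i> ^ j)"] lu lv
    by (simp add: nth_append)
  have e2: "D m u v = (1 / 2 ^ m) * p * q * (if u!m = v!m then 1 else 0)"
    unfolding D_def p_def q_def by simp
  show ?thesis unfolding e e2 using um vm
    by (auto simp: field_simps)
qed

lemma KS:
  assumes E: "E \<subseteq> Omega_n m"
  shows "(\<Sum>x\<in>(\<lambda>(xs,a). xs@[a]) ` (E \<times> {0,1}). \<Sum>y\<in>(\<lambda>(xs,a). xs@[a]) ` (E \<times> {0,1}). D (Suc m) x y)
       = (\<Sum>u\<in>E. \<Sum>v\<in>E. D m u v)"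
proof -
  have fin: "finite E" using E finite_Omega_n finite_subset by blast
  have inj: "inj_on (\<lambda>(xs,a). xs@[a]) (E \<times> {0::nat,1})"
    by (auto simp: inj_on_def)
  have "(\<Sum>x\<in>(\<lambda>(xs,a). xs@[a]) ` (E \<times> {0,1}). \<Sum>y\<in>(\<lambda>(xs,a). xs@[a]) ` (E \<times> {0,1}). D (Suc m) x y)
      = (\<Sum>(u,a)\<in>E \<times> {0,1}. \<Sum>(v,b)\<in>E \<times> {0,1}. D (Suc m) (u@[a]) (v@[b]))"
    unfolding sum.reindex[OF inj] comp_def by (simp add: case_prod_unfold)
  also have "\<dots> = (\<Sum>u\<in>E. \<Sum>a\<in>{0,1}. \<Sum>v\<in>E. \<Sum>b\<in>{0,1}. D (Suc m) (u@[a]) (v@[b]))"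
    by (simp add: sum.cartesian_product[symmetric])
  also have "\<dots> = (\<Sum>u\<in>E. \<Sum>v\<in>E. \<Sum>a\<in>{0,1}. \<Sum>b\<in>{0,1}. D (Suc m) (u@[a]) (v@[b]))"
    by (rule sum.cong[OF refl], rule sum.swap)
  also have "\<dots> = (\<Sum>u\<in>E. \<Sum>v\<in>E. D m u v)"
    using E by (intro sum.cong refl KD) auto
  finally show ?thesis .
qed

lemma mu_n_extn:
  assumes "B \<subseteq> Omega_n n"
  shows "mu_n (n + d) (extn (n + d) n B) = mu_n n B"
proof (induction d)
  case 0 show ?case using extn_refl[OF assms] by simp
next
  case (Suc d)
  have sub: "extn (n+d) n B \<subseteq> Omega_n (n+d)" by (auto simp: extn_def)
  have "mu_n (n + Suc d) (extn (n + Suc d) n B) = mu_n (n+d) (extn (n + d) n B)"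
    using KS[OF sub] extn_Suc[of n "n+d" B] by (simp add: mu_n_def)
  thus ?case using Suc by simp
qed

lemma mu_n_unique_le:
  assumes B: "B \<subseteq> Omega_n n" and B': "B' \<subseteq> Omega_n m" and c: "cyl n B = cyl m B'" and nm: "n \<le> m"
  shows "mu_n n B = mu_n m B'"
proof -
  have "B' = prefix_of m ` cyl m B'" using prefix_cyl[OF B'] by simp
  also have "\<dots> = prefix_of m ` cyl m (extn m n B)" using c cyl_extn[OF nm] by simp
  also have "\<dots> = extn m n B" by (rule prefix_cyl) (auto simp: extn_def)
  finally have "B' = extn m n B" .
  moreover obtain d where "m = n + d" using nm le_Suc_ex by blast
  ultimately show ?thesis using mu_n_extn[OF B] by simp
qed

lemma mu_cyl:
  assumes B: "B \<subseteq> Omega_n n"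
  shows "mu (cyl n B) = mu_n n B"
  unfolding mu_def
proof (rule the_equality)
  show "\<exists>n' B'. B' \<subseteq> Omega_n n' \<and> cyl n B = cyl n' B' \<and> mu_n n B = mu_n n' B'"
    using B by blast
next
  fix x assume "\<exists>n' B'. B' \<subseteq> Omega_n n' \<and> cyl n B = cyl n' B' \<and> x = mu_n n' B'"
  then obtain n' B' where h: "B' \<subseteq> Omega_n n'" "cyl n B = cyl n' B'" "x = mu_n n' B'" by blast
  show "x = mu_n n B"
  proof (cases "n \<le> n'")
    case True thus ?thesis using mu_n_unique_le[OF B h(1) h(2)] h(3) by simp
  next
    case False thus ?thesis using mu_n_unique_le[OF h(1) B h(2)[symmetric]] h(3) by simp
  qed
qed

lemma inv_i_pow: "inverse (\<i> ^ j) = cnj (\<i> ^ j)"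
  by (metis complex_cnj_i complex_cnj_power inverse_i power_inverse)

lemma quad_nonneg:
  fixes f :: "'a \<Rightarrow> complex" and g :: "'a \<Rightarrow> 'b"
  assumes fin: "finite B"
  shows "0 \<le> Re (\<Sum>w\<in>B. \<Sum>w'\<in>B. f w * cnj (f w') * (if g w = g w' then 1 else 0))"
proof -
  define z where "z e = (\<Sum>w\<in>{w\<in>B. g w = e}. f w)" for e
  have inner: "(\<Sum>w'\<in>B. f w * cnj (f w') * (if g w = g w' then 1 else 0)) = f w * cnj (z (g w))" for w
  proof -
    have "(\<Sum>w'\<in>B. f w * cnj (f w') * (if g w = g w' then 1 else 0))
        = (\<Sum>w'\<in>B. if g w' = g w then f w * cnj (f w') else 0)"
      by (rule sum.cong) auto
    also have "\<dots> = (\<Sum>w'\<in>{w'\<in>B. g w' = g w}. f w * cnj (f w'))"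
      using fin by (simp add: sum.inter_filter)
    also have "\<dots> = f w * cnj (z (g w))"
      by (simp add: z_def sum_distrib_left)
    finally show ?thesis .
  qed
  have "(\<Sum>w\<in>B. \<Sum>w'\<in>B. f w * cnj (f w') * (if g w = g w' then 1 else 0))
      = (\<Sum>w\<in>B. f w * cnj (z (g w)))" by (simp add: inner)
  also have "\<dots> = (\<Sum>e\<in>g ` B. \<Sum>w\<in>{w\<in>B. g w = e}. f w * cnj (z (g w)))"
    using fin by (rule sum.image_gen)
  also have "\<dots> = (\<Sum>e\<in>g ` B. z e * cnj (z e))"
    by (rule sum.cong[OF refl]) (simp add: z_def sum_distrib_right)
  finally have eq: "(\<Sum>w\<in>B. \<Sum>w'\<in>B. f w * cnj (f w') * (if g w = g w' then 1 else 0))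
      = (\<Sum>e\<in>g ` B. z e * cnj (z e))" .
  have "0 \<le> (\<Sum>e\<in>g ` B. Re (z e * cnj (z e)))"
    by (rule sum_nonneg) (simp add: complex_mult_cnj)
  thus ?thesis unfolding eq by (simp add: Re_sum)
qed

lemma Re_div_pow2: "Re (x / 2 ^ n) = Re x / 2 ^ n"
proof -
  have "x / 2^n = complex_of_real (1/2^n) * x" by (simp add: field_simps)
  thus ?thesis by simp
qed

lemma mu_n_nonneg:
  assumes fin: "finite B"
  shows "0 \<le> mu_n n B"
proof -
  define f where "f w = (\<Prod>k\<in>{1..n}. \<i> ^ jump w k)" for w
  have d: "D n w w' = (f w * cnj (f w') * (if w!n = w'!n then 1 else 0)) / 2 ^ n" for w w'
    unfolding D_def f_def by (simp add: inv_i_pow)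
  have "mu_n n B = Re (\<Sum>w\<in>B. \<Sum>w'\<in>B. f w * cnj (f w') * (if w!n = w'!n then 1 else 0)) / 2 ^ n"
    unfolding mu_n_def d by (simp only: sum_divide_distrib[symmetric] Re_div_pow2)
  thus ?thesis using quad_nonneg[OF fin, of f "\<lambda>w. w!n"] by simp
qed

definition SS :: "nat \<Rightarrow> nat list set \<Rightarrow> nat list set \<Rightarrow> complex" where
  "SS n U V = (\<Sum>w\<in>U. \<Sum>w'\<in>V. D n w w')"

lemma SS_Un1: "finite U \<Longrightarrow> finite V \<Longrightarrow> U \<inter> V = {} \<Longrightarrow> SS n (U \<union> V) W = SS n U W + SS n V W"
  unfolding SS_def by (rule sum.union_disjoint)

lemma SS_Un2: "finite V \<Longrightarrow> finite W \<Longrightarrow> V \<inter> W = {} \<Longrightarrow> SS n U (V \<union> W) = SS n U V + SS n U W"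
  unfolding SS_def by (simp add: sum.union_disjoint sum.distrib)

lemma mu_n_grade2:
  assumes f: "finite X" "finite Y" "finite Z"
    and d: "X \<inter> Y = {}" "X \<inter> Z = {}" "Y \<inter> Z = {}"
  shows "mu_n n (X \<union> Y \<union> Z) = mu_n n (X \<union> Y) + mu_n n (X \<union> Z) + mu_n n (Y \<union> Z)
           - mu_n n X - mu_n n Y - mu_n n Z"
proof -
  have m: "mu_n n U = Re (SS n U U)" for U unfolding mu_n_def SS_def ..
  have d2: "(X \<union> Y) \<inter> Z = {}" using d by auto
  have fXY: "finite (X \<union> Y)" using f by simp
  have "SS n (X \<union> Y \<union> Z) (X \<union> Y \<union> Z) =
    SS n X X + SS n X Y + SS n X Z + SS n Y X + SS n Y Y + SS n Y Z + SS n Z X + SS n Z Y + SS n Z Z"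
    using f d d2 fXY by (simp add: SS_Un1 SS_Un2)
  moreover have "SS n (X \<union> Y) (X \<union> Y) = SS n X X + SS n X Y + SS n Y X + SS n Y Y"
    using f d by (simp add: SS_Un1 SS_Un2)
  moreover have "SS n (X \<union> Z) (X \<union> Z) = SS n X X + SS n X Z + SS n Z X + SS n Z Z"
    using f d by (simp add: SS_Un1 SS_Un2)
  moreover have "SS n (Y \<union> Z) (Y \<union> Z) = SS n Y Y + SS n Y Z + SS n Z Y + SS n Z Z"
    using f d by (simp add: SS_Un1 SS_Un2)
  ultimately show ?thesis unfolding m by simp
qed

lemma mu_up: "A \<subseteq> Omega \<Longrightarrow> mu (up n A) = mu_n n (prefix_of n ` A)"
  using up_cyl mu_cyl prefix_image_sub by metis

lemma up_mono: "m \<le> n \<Longrightarrow> up n A \<subseteq> up m A"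
  unfolding up_def by auto

lemma up_Un: "up n (A \<union> B) = up n A \<union> up n B"
  unfolding up_def by auto

lemma sub_up: "A \<subseteq> Omega \<Longrightarrow> A \<subseteq> up n A"
  unfolding up_def by auto

lemma lower_union:
  assumes A: "A \<in> Lower" and B: "B \<in> Lower" shows "A \<union> B \<in> Lower"
proof -
  have AO: "A \<subseteq> Omega" and BO: "B \<subseteq> Omega" and AL: "A = (\<Inter>n. up n A)" and BL: "B = (\<Inter>n. up n B)"
    using A B by (auto simp: Lower_def)
  have "(\<Inter>n. up n (A \<union> B)) \<subseteq> A \<union> B"
  proof
    fix w assume w: "w \<in> (\<Inter>n. up n (A \<union> B))"
    show "w \<in> A \<union> B"
    proof (cases "w \<in> A")
      case False
      then obtain n0 where n0: "w \<notin> up n0 A" using AL by blast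
      have "w \<in> up m B" for m
      proof -
        have "w \<in> up (max m n0) A \<union> up (max m n0) B" using w up_Un by blast
        moreover have "w \<notin> up (max m n0) A" using n0 up_mono[of n0 "max m n0" A] by auto
        ultimately have "w \<in> up (max m n0) B" by blast
        thus ?thesis using up_mono[of m "max m n0" B] by auto
      qed
      hence "w \<in> B" using BL by blast
      thus ?thesis by blast
    qed simp
  qed
  moreover have "A \<union> B \<subseteq> (\<Inter>n. up n (A \<union> B))" using AO BO sub_up[of "A \<union> B"] by blast
  ultimately show ?thesis using AO BO unfolding Lower_def by blast
qed

lemma up_cyl_eq: assumes "B \<subseteq> Omega_n n" "n \<le> m" shows "up m (cyl n B) = cyl n B"
proof
  show "cyl n B \<subseteq> up m (cyl n B)" by (rule sub_up) (auto simp: cyl_def)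
  show "up m (cyl n B) \<subseteq> cyl n B"
  proof
    fix w assume "w \<in> up m (cyl n B)"
    then obtain w' where w: "w \<in> Omega" "w' \<in> cyl n B" "\<forall>k\<le>m. w k = w' k" by (auto simp: up_def)
    hence "prefix_of n w = prefix_of n w'" using assms(2) by (auto simp: prefix_eq_iff)
    thus "w \<in> cyl n B" using w by (auto simp: cyl_def)
  qed
qed

lemma cyl_lower: assumes "B \<subseteq> Omega_n n" shows "cyl n B \<in> Lower"
proof -
  have "(\<Inter>m. up m (cyl n B)) = cyl n B"
  proof
    show "(\<Inter>m. up m (cyl n B)) \<subseteq> cyl n B" using up_cyl_eq[OF assms order_refl] by blast
    show "cyl n B \<subseteq> (\<Inter>m. up m (cyl n B))" using sub_up[of "cyl n B"] by (auto simp: cyl_def)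
  qed
  thus ?thesis by (auto simp: Lower_def cyl_def)
qed

lemma cyl_conv: assumes "B \<subseteq> Omega_n n" shows "(\<lambda>m. mu (up m (cyl n B))) \<longlonglongrightarrow> mu (cyl n B)"
proof -
  have "eventually (\<lambda>m. mu (cyl n B) = mu (up m (cyl n B))) sequentially"
    unfolding eventually_sequentially by (rule exI[of _ n]) (simp add: up_cyl_eq[OF assms])
  thus ?thesis by (rule Lim_transform_eventually[rotated]) simp
qed

lemma separate:
  assumes A: "A \<in> Lower" and B: "B \<in> Lower" and AB: "A \<inter> B = {}"
  shows "\<exists>N. \<forall>a\<in>A. \<forall>b\<in>B. \<not> (\<forall>j\<le>N. a j = b j)"
proof (rule ccontr)
  assume "\<not> ?thesis"
  hence H: "\<forall>N. \<exists>a\<in>A. \<exists>b\<in>B. \<forall>j\<le>N. a j = b j" by blast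
  have AO: "A \<subseteq> Omega" and BO: "B \<subseteq> Omega" and AL: "A = (\<Inter>n. up n A)" and BL: "B = (\<Inter>n. up n B)"
    using A B by (auto simp: Lower_def)
  define G where "G s = (\<forall>m. \<exists>a\<in>A. \<exists>b\<in>B. (\<forall>j\<le>m. a j = b j) \<and> (\<forall>j<length s. a j = s!j))" for s
  have step: "G (s@[0]) \<or> G (s@[1])" if Gs: "G s" for s
  proof (rule ccontr)
    assume "\<not> (G (s@[0]) \<or> G (s@[1]))"
    then obtain m0 m1 where
      m0: "\<not> (\<exists>a\<in>A. \<exists>b\<in>B. (\<forall>j\<le>m0. a j = b j) \<and> (\<forall>j<length (s@[0]). a j = (s@[0])!j))" and
      m1: "\<not> (\<exists>a\<in>A. \<exists>b\<in>B. (\<forall>j\<le>m1. a j = b j) \<and> (\<forall>j<length (s@[1]). a j = (s@[1])!j))"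
      unfolding G_def by blast
    obtain a b where ab: "a \<in> A" "b \<in> B" "\<forall>j\<le>max m0 m1. a j = b j" "\<forall>j<length s. a j = s!j"
      using Gs unfolding G_def by blast
    have "a (length s) \<in> {0,1}" using ab(1) AO by (auto simp: Omega_def)
    hence c01: "a (length s) = 0 \<or> a (length s) = 1" by simp
    have match: "\<forall>j<length (s@[c]). a j = (s@[c])!j" if "a (length s) = c" for c
      using ab(4) that by (auto simp: nth_append less_Suc_eq)
    have ag0: "\<forall>j\<le>m0. a j = b j" and ag1: "\<forall>j\<le>m1. a j = b j" using ab(3) by auto
    from c01 show False
    proof
      assume "a (length s) = 0"
      from match[OF this] ag0 ab(1,2) m0 show False by blast
    next
      assume "a (length s) = 1"
      from match[OF this] ag1 ab(1,2) m1 show False by blast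
    qed
  qed
  define sq where "sq = rec_nat [] (\<lambda>k s. if G (s@[0]) then s@[0] else s@[1::nat])"
  have sq0: "sq 0 = []" and sqS: "sq (Suc k) = (if G (sq k @ [0]) then sq k @ [0] else sq k @ [1])" for k
    by (simp_all add: sq_def)
  have G0: "G []" using H unfolding G_def by simp
  have Gsq: "G (sq k)" for k
    by (induction k) (use G0 step in \<open>auto simp: sq0 sqS\<close>)
  have lsq: "length (sq k) = k" for k
    by (induction k) (auto simp: sq0 sqS)
  have nsq: "j < k \<Longrightarrow> sq k ! j = sq (Suc j) ! j" for j k
  proof (induction k)
    case (Suc k)
    show ?case
    proof (cases "j < k")
      case True
      have "sq (Suc k) ! j = sq k ! j" using True lsq[of k] by (auto simp: sqS nth_append)
      thus ?thesis using Suc True by simp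
    next
      case False thus ?thesis using Suc by (simp add: less_Suc_eq)
    qed
  qed simp
  define w where "w j = sq (Suc j) ! j" for j
  have agree: "\<exists>a\<in>A. \<exists>b\<in>B. \<forall>j\<le>k. w j = a j \<and> w j = b j" for k
  proof -
    obtain a b where ab: "a \<in> A" "b \<in> B" "\<forall>j\<le>k. a j = b j" "\<forall>j<length (sq (Suc k)). a j = sq (Suc k) ! j"
      using Gsq[of "Suc k"] unfolding G_def by blast
    have "\<forall>j\<le>k. w j = a j \<and> w j = b j"
      using ab(3,4) nsq[of _ "Suc k"] lsq[of "Suc k"] by (auto simp: w_def)
    thus ?thesis using ab by blast
  qed
  have wO: "w \<in> Omega"
  proof -
    have "w j \<in> {0,1}" for j
    proof -
      obtain a where "a \<in> A" "w j = a j" using agree[of j] by auto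
      thus ?thesis using AO by (auto simp: Omega_def)
    qed
    moreover have "w 0 = 0"
    proof -
      obtain a where "a \<in> A" "w 0 = a 0" using agree[of 0] by auto
      thus ?thesis using AO by (auto simp: Omega_def)
    qed
    ultimately show ?thesis by (auto simp: Omega_def)
  qed
  have upAB: "w \<in> up k A \<and> w \<in> up k B" for k
  proof -
    obtain a b where "a \<in> A" "b \<in> B" "\<forall>j\<le>k. w j = a j \<and> w j = b j" using agree[of k] by blast
    thus ?thesis using wO unfolding up_def by blast
  qed
  have "w \<in> (\<Inter>n. up n A)" "w \<in> (\<Inter>n. up n B)" using upAB by blast+
  hence "w \<in> A" "w \<in> B" by (simp_all only: AL[symmetric] BL[symmetric])
  thus False using AB by blast
qed

lemma separate_prefix:
  assumes "A \<in> Lower" "B \<in> Lower" "A \<inter> B = {}"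
  shows "\<exists>N. \<forall>n\<ge>N. prefix_of n ` A \<inter> prefix_of n ` B = {}"
proof -
  obtain N where N: "\<forall>a\<in>A. \<forall>b\<in>B. \<not> (\<forall>j\<le>N. a j = b j)" using separate[OF assms] by blast
  have "prefix_of n ` A \<inter> prefix_of n ` B = {}" if "n \<ge> N" for n
  proof -
    have "\<not> prefix_of n a = prefix_of n b" if ab: "a \<in> A" "b \<in> B" for a b
    proof
      assume "prefix_of n a = prefix_of n b"
      hence "\<forall>j\<le>N. a j = b j" using \<open>n \<ge> N\<close> by (simp add: prefix_eq_iff)
      thus False using N ab by blast
    qed
    thus ?thesis by blast
  qed
  thus ?thesis by blast
qed

lemma ben_lim: "X \<in> Beneficial \<Longrightarrow> (\<lambda>n. mu (up n X)) \<longlonglongrightarrow> mu_hat X"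
  unfolding Beneficial_def mu_hat_def using convergent_LIMSEQ_iff by blast

lemma key:
  assumes A: "A \<in> Beneficial \<inter> Lower" and B: "B \<in> Beneficial \<inter> Lower" and C: "C \<in> Beneficial \<inter> Lower"
    and d: "A \<inter> B = {}" "A \<inter> C = {}" "B \<inter> C = {}"
    and u: "A \<union> B \<in> Beneficial" "A \<union> C \<in> Beneficial" "B \<union> C \<in> Beneficial"
  shows "(\<lambda>n. mu (up n (A \<union> B \<union> C))) \<longlonglongrightarrow>
     mu_hat (A \<union> B) + mu_hat (A \<union> C) + mu_hat (B \<union> C) - mu_hat A - mu_hat B - mu_hat C"
proof -
  have AO: "A \<subseteq> Omega" and BO: "B \<subseteq> Omega" and CO: "C \<subseteq> Omega" using A B C by (auto simp: Lower_def)
  obtain N1 where N1: "\<forall>n\<ge>N1. prefix_of n ` A \<inter> prefix_of n ` B = {}"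
    using separate_prefix[of A B] A B d by blast
  obtain N2 where N2: "\<forall>n\<ge>N2. prefix_of n ` A \<inter> prefix_of n ` C = {}"
    using separate_prefix[of A C] A C d by blast
  obtain N3 where N3: "\<forall>n\<ge>N3. prefix_of n ` B \<inter> prefix_of n ` C = {}"
    using separate_prefix[of B C] B C d by blast
  have fin: "finite (prefix_of n ` X)" if "X \<subseteq> Omega" for X n
    using prefix_image_sub[OF that] finite_Omega_n finite_subset by blast
  have ev: "eventually (\<lambda>n. mu (up n (A \<union> B)) + mu (up n (A \<union> C)) + mu (up n (B \<union> C))
       - mu (up n A) - mu (up n B) - mu (up n C) = mu (up n (A \<union> B \<union> C))) sequentially"
    unfolding eventually_sequentially
  proof (intro exI allI impI)
    fix n assume n: "max N1 (max N2 N3) \<le> n"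
    have "mu (up n (A \<union> B \<union> C)) = mu_n n (prefix_of n ` A \<union> prefix_of n ` B \<union> prefix_of n ` C)"
      using AO BO CO by (simp add: mu_up image_Un)
    also have "\<dots> = mu_n n (prefix_of n ` A \<union> prefix_of n ` B) + mu_n n (prefix_of n ` A \<union> prefix_of n ` C)
        + mu_n n (prefix_of n ` B \<union> prefix_of n ` C) - mu_n n (prefix_of n ` A)
        - mu_n n (prefix_of n ` B) - mu_n n (prefix_of n ` C)"
      by (rule mu_n_grade2) (use fin AO BO CO N1 N2 N3 n in auto)
    also have "\<dots> = mu (up n (A \<union> B)) + mu (up n (A \<union> C)) + mu (up n (B \<union> C))
       - mu (up n A) - mu (up n B) - mu (up n C)"
      using AO BO CO by (simp add: mu_up image_Un)
    finally show "mu (up n (A \<union> B)) + mu (up n (A \<union> C)) + mu (up n (B \<union> C))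
       - mu (up n A) - mu (up n B) - mu (up n C) = mu (up n (A \<union> B \<union> C))" by simp
  qed
  have "(\<lambda>n. mu (up n (A \<union> B)) + mu (up n (A \<union> C)) + mu (up n (B \<union> C))
       - mu (up n A) - mu (up n B) - mu (up n C)) \<longlonglongrightarrow>
     mu_hat (A \<union> B) + mu_hat (A \<union> C) + mu_hat (B \<union> C) - mu_hat A - mu_hat B - mu_hat C"
    using A B C u by (intro tendsto_intros ben_lim) auto
  thus ?thesis using ev by (rule Lim_transform_eventually)
qed

lemma cyl_in: "A \<in> Cyl \<Longrightarrow> A \<in> Beneficial \<inter> Lower \<and> mu_hat A = mu A"
proof -
  assume "A \<in> Cyl"
  then obtain n B where B: "B \<subseteq> Omega_n n" and A: "A = cyl n B" by (auto simp: Cyl_def)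
  have c: "(\<lambda>m. mu (up m A)) \<longlonglongrightarrow> mu A" using cyl_conv[OF B] A by simp
  have "A \<in> Lower" using cyl_lower[OF B] A by simp
  moreover have "A \<subseteq> Omega" using A by (auto simp: cyl_def)
  ultimately show ?thesis using c by (auto simp: Beneficial_def mu_hat_def convergent_def limI)
qed

lemma empty_Cyl: "{} \<in> Cyl"
  unfolding Cyl_def cyl_def by (rule CollectI, rule exI[of _ 0], rule exI[of _ "{}"]) simp

lemma Omega_Cyl: "Omega \<in> Cyl"
  unfolding Cyl_def cyl_def using prefix_in_Omega_n by (auto intro!: exI[of _ 0] exI[of _ "Omega_n 0"])

theorem theorem4p1:
  shows "quad_alg Omega Lower \<and> quad_alg Omega (Beneficial \<inter> Lower) \<and>
         q_measure (Beneficial \<inter> Lower) mu_hat \<and>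
         Cyl \<subseteq> Beneficial \<inter> Lower \<and> (\<forall>A\<in>Cyl. mu_hat A = mu A)"
proof -
  have cyls: "Cyl \<subseteq> Beneficial \<inter> Lower" and cyleq: "\<forall>A\<in>Cyl. mu_hat A = mu A" using cyl_in by auto
  have e: "{} \<in> Beneficial \<inter> Lower" "Omega \<in> Beneficial \<inter> Lower" using cyls empty_Cyl Omega_Cyl by auto
  have LP: "Lower \<subseteq> Pow Omega" by (auto simp: Lower_def)
  have q1: "quad_alg Omega Lower"
    unfolding quad_alg_def using LP e lower_union by blast
  have q2: "quad_alg Omega (Beneficial \<inter> Lower)"
    unfolding quad_alg_def
  proof (intro conjI ballI impI)
    show "Beneficial \<inter> Lower \<subseteq> Pow Omega" using LP by blast
    show "{} \<in> Beneficial \<inter> Lower" "Omega \<in> Beneficial \<inter> Lower" using e by auto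
    fix A B C assume ABC: "A \<in> Beneficial \<inter> Lower" "B \<in> Beneficial \<inter> Lower" "C \<in> Beneficial \<inter> Lower"
      and h: "A \<inter> B = {} \<and> A \<inter> C = {} \<and> B \<inter> C = {} \<and> A \<union> B \<in> Beneficial \<inter> Lower \<and>
             A \<union> C \<in> Beneficial \<inter> Lower \<and> B \<union> C \<in> Beneficial \<inter> Lower"
    have "(\<lambda>n. mu (up n (A \<union> B \<union> C))) \<longlonglongrightarrow>
     mu_hat (A \<union> B) + mu_hat (A \<union> C) + mu_hat (B \<union> C) - mu_hat A - mu_hat B - mu_hat C"
      by (rule key) (use ABC h in auto)
    hence "convergent (\<lambda>n. mu (up n (A \<union> B \<union> C)))" by (auto simp: convergent_def)
    moreover have "A \<union> B \<union> C \<in> Lower" using ABC h lower_union by blast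
    ultimately show "A \<union> B \<union> C \<in> Beneficial \<inter> Lower" using LP by (auto simp: Beneficial_def)
  qed
  have q3: "q_measure (Beneficial \<inter> Lower) mu_hat"
    unfolding q_measure_def
  proof (intro conjI ballI impI)
    fix A assume A: "A \<in> Beneficial \<inter> Lower"
    have "\<forall>n. 0 \<le> mu (up n A)"
    proof
      fix n
      have "A \<subseteq> Omega" using A by (auto simp: Lower_def)
      thus "0 \<le> mu (up n A)"
        using mu_up mu_n_nonneg prefix_image_sub finite_Omega_n finite_subset by metis
    qed
    thus "0 \<le> mu_hat A" using ben_lim[of A] A by (auto intro: LIMSEQ_le_const)
  next
    fix A B C assume ABC: "A \<in> Beneficial \<inter> Lower" "B \<in> Beneficial \<inter> Lower" "C \<in> Beneficial \<inter> Lower"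
      and h: "A \<inter> B = {} \<and> A \<inter> C = {} \<and> B \<inter> C = {} \<and> A \<union> B \<in> Beneficial \<inter> Lower \<and>
             A \<union> C \<in> Beneficial \<inter> Lower \<and> B \<union> C \<in> Beneficial \<inter> Lower"
    have "(\<lambda>n. mu (up n (A \<union> B \<union> C))) \<longlonglongrightarrow>
     mu_hat (A \<union> B) + mu_hat (A \<union> C) + mu_hat (B \<union> C) - mu_hat A - mu_hat B - mu_hat C"
      by (rule key) (use ABC h in auto)
    thus "mu_hat (A \<union> B \<union> C) =
     mu_hat (A \<union> B) + mu_hat (A \<union> C) + mu_hat (B \<union> C) - mu_hat A - mu_hat B - mu_hat C"
      unfolding mu_hat_def[of "A \<union> B \<union> C"] by (rule limI)
  qed
  show ?thesis using q1 q2 q3 cyls cyleq by blast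
qed
end
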